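(* Let $A$ be a reduced commutative $\mathbb{N}$-graded ring and let $I=A_{\ge d}$ for some positive integer $d$. Then $I$ is an integrally closed ideal of $A$.
   Context: For an $\mathbb{N}$-graded ring $A$ and a positive integer $m$, $A_{\ge m}=\bigoplus_{j\ge m}A_j$. *)

theory Defs
  imports Main
begin

definition nat_graded :: "(nat \<Rightarrow> 'a::comm_ring_1 set) \<Rightarrow> bool" where
  "nat_graded G \<longleftrightarrow>
     (\<forall>n. 0 \<in> G n \<and> (\<forall>x\<in>G n. \<forall>y\<in>G n. x + y \<in> G n) \<and> (\<forall>x\<in>G n. - x \<in> G n)) \<and>
     (\<forall>m n. \<forall>x\<in>G m. \<forall>y\<in>G n. x * y \<in> G (m + n)) \<and>
     (\<forall>x. \<exists>!f. (\<forall>n. f n \<in> G n) \<and> finite {n. f n \<noteq> 0} \<and> x = (\<Sum>n\<in>{n. f n \<noteq> 0}. f n))"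

definition graded_comp :: "(nat \<Rightarrow> 'a::comm_ring_1 set) \<Rightarrow> 'a \<Rightarrow> nat \<Rightarrow> 'a" where
  "graded_comp G x = (THE f. (\<forall>n. f n \<in> G n) \<and> finite {n. f n \<noteq> 0} \<and> x = (\<Sum>n\<in>{n. f n \<noteq> 0}. f n))"

definition graded_ge :: "(nat \<Rightarrow> 'a::comm_ring_1 set) \<Rightarrow> nat \<Rightarrow> 'a set" where
  "graded_ge G m = {x. \<forall>n<m. graded_comp G x n = 0}"

definition reduced_ring :: "'a::comm_ring_1 itself \<Rightarrow> bool" where
  "reduced_ring _ \<longleftrightarrow> (\<forall>(x::'a) n. x ^ n = 0 \<longrightarrow> x = 0)"

definition is_ideal :: "'a::comm_ring_1 set \<Rightarrow> bool" where
  "is_ideal I \<longleftrightarrow> 0 \<in> I \<and> (\<forall>x\<in>I. \<forall>y\<in>I. x + y \<in> I) \<and> (\<forall>x\<in>I. \<forall>r. r * x \<in> I)"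

fun ideal_pow :: "'a::comm_ring_1 set \<Rightarrow> nat \<Rightarrow> 'a set" where
  "ideal_pow I 0 = UNIV"
| "ideal_pow I (Suc k) =
     {s. \<exists>(m::nat) (a::nat \<Rightarrow> 'a) (b::nat \<Rightarrow> 'a). (\<forall>j<m. a j \<in> I \<and> b j \<in> ideal_pow I k) \<and> s = (\<Sum>j<m. a j * b j)}"

definition integral_over_ideal :: "'a::comm_ring_1 set \<Rightarrow> 'a \<Rightarrow> bool" where
  "integral_over_ideal I x \<longleftrightarrow>
     (\<exists>n a. n \<ge> 1 \<and> (\<forall>i\<in>{1..n}. a i \<in> ideal_pow I i) \<and>
            x ^ n + (\<Sum>i=1..n. a i * x ^ (n - i)) = 0)"

definition integrally_closed_ideal :: "'a::comm_ring_1 set \<Rightarrow> bool" where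
  "integrally_closed_ideal I \<longleftrightarrow> is_ideal I \<and> (\<forall>x. integral_over_ideal I x \<longrightarrow> x \<in> I)"

end

theory Submission
  imports Defs
begin

locale grd =
  fixes G :: "nat \<Rightarrow> 'a::comm_ring_1 set"
  assumes gr: "nat_graded G"
begin

lemma G0: "0 \<in> G n" using gr unfolding nat_graded_def by blast
lemma Gadd: "x \<in> G n \<Longrightarrow> y \<in> G n \<Longrightarrow> x + y \<in> G n" using gr unfolding nat_graded_def by blast
lemma Gneg: "x \<in> G n \<Longrightarrow> - x \<in> G n" using gr unfolding nat_graded_def by blast
lemma Gmul: "x \<in> G m \<Longrightarrow> y \<in> G n \<Longrightarrow> x * y \<in> G (m + n)" using gr unfolding nat_graded_def by blast
lemma ex1: "\<exists>!f. (\<forall>n. f n \<in> G n) \<and> finite {n. f n \<noteq> 0} \<and> x = (\<Sum>n\<in>{n. f n \<noteq> 0}. f n)"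
  using gr unfolding nat_graded_def by blast

abbreviation "cp \<equiv> graded_comp G"

lemma cp_spec: "(\<forall>n. cp x n \<in> G n) \<and> finite {n. cp x n \<noteq> 0} \<and> x = (\<Sum>n\<in>{n. cp x n \<noteq> 0}. cp x n)"
  unfolding graded_comp_def by (rule theI'[OF ex1])

lemma cp_G: "cp x n \<in> G n" using cp_spec by blast

lemma cp_bound: "\<exists>N. \<forall>n\<ge>N. cp x n = 0"
proof -
  have "finite {n. cp x n \<noteq> 0}" using cp_spec by blast
  then obtain m where "\<forall>n\<in>{n. cp x n \<noteq> 0}. n < m" using finite_nat_set_iff_bounded by blast
  then show ?thesis by (metis leD mem_Collect_eq)
qed

lemma cp_sumN: assumes "\<And>n. n \<ge> N \<Longrightarrow> cp x n = 0" shows "x = (\<Sum>n<N. cp x n)"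
proof -
  have "x = (\<Sum>n\<in>{n. cp x n \<noteq> 0}. cp x n)" using cp_spec by blast
  also have "\<dots> = (\<Sum>n<N. cp x n)"
    by (rule sum.mono_neutral_left) (use assms leI in auto)
  finally show ?thesis .
qed

lemma cp_eqI: assumes "\<And>n. f n \<in> G n" "\<And>n. n \<ge> N \<Longrightarrow> f n = 0" "x = (\<Sum>n<N. f n)"
  shows "cp x = f"
proof -
  have fin: "finite {n. f n \<noteq> 0}"
  proof (rule finite_subset[of _ "{..<N}"])
    show "{n. f n \<noteq> 0} \<subseteq> {..<N}" using assms(2) not_less by blast
  qed simp
  have "(\<Sum>n\<in>{n. f n \<noteq> 0}. f n) = (\<Sum>n<N. f n)"
  proof (rule sum.mono_neutral_left)
    show "{n. f n \<noteq> 0} \<subseteq> {..<N}" using assms(2) not_less by blast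
  qed auto
  then show ?thesis unfolding graded_comp_def
    by (intro the1_equality[OF ex1]) (use assms fin in auto)
qed

lemma cp_add: "cp (x + y) n = cp x n + cp y n"
proof -
  obtain N1 where N1: "\<forall>n\<ge>N1. cp x n = 0" using cp_bound by blast
  obtain N2 where N2: "\<forall>n\<ge>N2. cp y n = 0" using cp_bound by blast
  define N where "N = max N1 N2"
  have "cp (x + y) = (\<lambda>n. cp x n + cp y n)"
  proof (rule cp_eqI[where N = N])
    show "\<And>n. cp x n + cp y n \<in> G n" by (simp add: Gadd cp_G)
    show "\<And>n. N \<le> n \<Longrightarrow> cp x n + cp y n = 0" using N1 N2 N_def by auto
    have "x = (\<Sum>n<N. cp x n)" by (rule cp_sumN) (use N1 N_def in auto)
    moreover have "y = (\<Sum>n<N. cp y n)" by (rule cp_sumN) (use N2 N_def in auto)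
    ultimately show "x + y = (\<Sum>n<N. cp x n + cp y n)" by (simp add: sum.distrib)
  qed
  then show ?thesis by simp
qed

lemma cp_zero: "cp 0 n = 0"
proof -
  have "cp 0 = (\<lambda>n. 0)" by (rule cp_eqI[where N = 0]) (auto simp: G0)
  then show ?thesis by simp
qed

lemma cp_neg: "cp (- x) n = - cp x n"
  using cp_add[of x "- x" n] by (simp add: cp_zero eq_neg_iff_add_eq_0 add.commute)

lemma cp_hom: assumes "h \<in> G m" shows "cp h n = (if n = m then h else 0)"
proof -
  have "cp h = (\<lambda>n. if n = m then h else 0)"
    by (rule cp_eqI[where N = "Suc m"]) (auto simp: G0 assms)
  then show ?thesis by simp
qed

lemma cp_sum: "finite A \<Longrightarrow> cp (\<Sum>i\<in>A. f i) n = (\<Sum>i\<in>A. cp (f i) n)"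
  by (induction A rule: finite_induct) (auto simp: cp_zero cp_add)

definition ge :: "nat \<Rightarrow> 'a set" where "ge k = {x. \<forall>n<k. cp x n = 0}"

lemma mult_low:
  assumes x: "x \<in> ge a" and y: "y \<in> ge b" and n: "n \<le> a + b"
  shows "cp (x * y) n = (if n = a + b then cp x a * cp y b else 0)"
proof -
  obtain N1 where N1: "\<forall>n\<ge>N1. cp x n = 0" using cp_bound by blast
  obtain N2 where N2: "\<forall>n\<ge>N2. cp y n = 0" using cp_bound by blast
  define N where "N = max (max N1 N2) (Suc (a + b))"
  have xs: "x = (\<Sum>i<N. cp x i)" by (rule cp_sumN) (use N1 N_def in auto)
  have ys: "y = (\<Sum>j<N. cp y j)" by (rule cp_sumN) (use N2 N_def in auto)
  have "x * y = (\<Sum>i<N. \<Sum>j<N. cp x i * cp y j)"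
    by (subst xs, subst ys) (simp add: sum_product)
  then have "cp (x * y) n = (\<Sum>i<N. \<Sum>j<N. cp (cp x i * cp y j) n)"
    by (simp add: cp_sum)
  also have "\<dots> = (\<Sum>i<N. \<Sum>j<N. if i = a then (if j = b then (if n = a + b then cp x a * cp y b else 0) else 0) else 0)"
  proof (intro sum.cong refl)
    fix i j
    have h: "cp (cp x i * cp y j) n = (if n = i + j then cp x i * cp y j else 0)"
      by (rule cp_hom) (simp add: Gmul cp_G)
    show "cp (cp x i * cp y j) n = (if i = a then (if j = b then (if n = a + b then cp x a * cp y b else 0) else 0) else 0)"
    proof (cases "i < a \<or> j < b")
      case True
      then have "cp x i * cp y j = 0" using x y unfolding ge_def by auto
      then show ?thesis using h True by auto
    next
      case False
      then show ?thesis using h n by auto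
    qed
  qed
  also have "\<dots> = (\<Sum>i<N. if i = a then (if n = a + b then cp x a * cp y b else 0) else 0)"
    by (intro sum.cong refl) (use N_def in auto)
  also have "\<dots> = (if n = a + b then cp x a * cp y b else 0)"
    using N_def by (simp add: sum.delta less_max_iff_disj)
  finally show ?thesis .
qed

lemma ge_mult: "x \<in> ge a \<Longrightarrow> y \<in> ge b \<Longrightarrow> x * y \<in> ge (a + b)"
  unfolding ge_def[of "a+b"] using mult_low by auto

lemma ge_cp_mult: "x \<in> ge a \<Longrightarrow> y \<in> ge b \<Longrightarrow> cp (x * y) (a + b) = cp x a * cp y b"
  using mult_low by auto

lemma ge0: "ge 0 = UNIV" unfolding ge_def by auto

lemma ge_add: "x \<in> ge k \<Longrightarrow> y \<in> ge k \<Longrightarrow> x + y \<in> ge k"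
  unfolding ge_def by (auto simp: cp_add)

lemma ge_zero: "0 \<in> ge k" unfolding ge_def by (auto simp: cp_zero)

lemma ge_sum: "(\<forall>j<(m::nat). f j \<in> ge k) \<Longrightarrow> (\<Sum>j<m. f j) \<in> ge k"
proof (induction m)
  case 0 then show ?case by (simp add: ge_zero)
next
  case (Suc m) then show ?case by (simp add: ge_add)
qed

lemma ge_mono: "a \<le> b \<Longrightarrow> x \<in> ge b \<Longrightarrow> x \<in> ge a"
  unfolding ge_def by auto

lemma ge_ideal: "is_ideal (ge k)"
  unfolding is_ideal_def using ge_zero ge_add ge_mult[of _ 0 _ k] ge0 by (metis UNIV_I add_0)

lemma pow_ge: "ideal_pow (ge d) i \<subseteq> ge (i * d)"
proof (induction i)
  case 0 then show ?case by (simp add: ge0)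
next
  case (Suc i)
  show ?case
  proof
    fix s assume "s \<in> ideal_pow (ge d) (Suc i)"
    then obtain m a b where ab: "\<forall>j<(m::nat). a j \<in> ge d \<and> b j \<in> ideal_pow (ge d) i" and s: "s = (\<Sum>j<m. a j * b j)"
      by (simp only: ideal_pow.simps mem_Collect_eq) blast
    have "\<forall>j<m. a j * b j \<in> ge (Suc i * d)"
    proof (intro allI impI)
      fix j assume "j < m"
      then have "a j \<in> ge d" "b j \<in> ge (i * d)" using ab Suc.IH by auto
      then show "a j * b j \<in> ge (Suc i * d)" using ge_mult[of "a j" d "b j" "i * d"] by simp
    qed
    then show "s \<in> ge (Suc i * d)" using s ge_sum by auto
  qed
qed

lemma pow_ge_mem: "x \<in> ge k \<Longrightarrow> x ^ m \<in> ge (m * k)"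
proof (induction m)
  case 0 then show ?case by (simp add: ge0)
next
  case (Suc m)
  then show ?case using ge_mult[of x k "x^m" "m*k"] by (auto simp: add.commute)
qed

lemma pow_lead: "x \<in> ge k \<Longrightarrow> cp (x ^ Suc m) (Suc m * k) = cp x k ^ Suc m"
proof (induction m)
  case 0 then show ?case by simp
next
  case (Suc m)
  have "cp (x * x ^ Suc m) (k + Suc m * k) = cp x k * cp (x ^ Suc m) (Suc m * k)"
    using ge_cp_mult[of x k "x ^ Suc m" "Suc m * k"] pow_ge_mem[of x k "Suc m"] Suc by auto
  then show ?case using Suc by simp
qed

end

theorem lemma3p6:
  fixes G :: "nat \<Rightarrow> 'a::comm_ring_1 set" and d :: nat
  assumes "nat_graded G"
    and "reduced_ring TYPE('a)"
    and "d > 0"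
  shows "integrally_closed_ideal (graded_ge G d)"
proof -
  interpret grd G using assms(1) by unfold_locales
  have eq: "graded_ge G d = ge d" unfolding graded_ge_def ge_def by simp
  have "x \<in> ge d" if intx: "integral_over_ideal (ge d) x" for x
  proof (rule ccontr)
    assume nx: "x \<notin> ge d"
    obtain n a where n1: "n \<ge> 1" and a: "\<forall>i\<in>{1..n}. a i \<in> ideal_pow (ge d) i"
      and eqn: "x ^ n + (\<Sum>i=1..n. a i * x ^ (n - i)) = 0"
      using intx[unfolded integral_over_ideal_def] by blast
    have ex: "\<exists>k. cp x k \<noteq> 0" using nx unfolding ge_def by auto
    define k where "k = (LEAST k. cp x k \<noteq> 0)"
    have ck: "cp x k \<noteq> 0" unfolding k_def using ex by (rule LeastI_ex)
    have xk: "x \<in> ge k" unfolding ge_def k_def using not_less_Least by blast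
    have kd: "k < d"
    proof (rule ccontr)
      assume "\<not> k < d"
      then have "x \<in> ge d" using ge_mono[OF _ xk] by simp
      then show False using nx by simp
    qed
    obtain n' where nn: "n = Suc n'" using n1 by (cases n) auto
    have lead: "cp (x ^ n) (n * k) = cp x k ^ n" using pow_lead[OF xk] nn by simp
    have rest: "cp (\<Sum>i=1..n. a i * x ^ (n - i)) (n * k) = 0"
    proof -
      have "cp (a i * x ^ (n - i)) (n * k) = 0" if i: "i \<in> {1..n}" for i
      proof -
        have ai: "a i \<in> ge (i * d)" using a i pow_ge by blast
        have xi: "x ^ (n - i) \<in> ge ((n - i) * k)" using pow_ge_mem[OF xk] .
        have s1: "n * k = i * k + (n - i) * k" using i by (simp add: add_mult_distrib[symmetric])
        have s2: "i * k < i * d" using i kd by simp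
        show ?thesis using mult_low[OF ai xi, of "n * k"] s1 s2 by simp
      qed
      then show ?thesis by (simp add: cp_sum)
    qed
    have "cp (x ^ n + (\<Sum>i=1..n. a i * x ^ (n - i))) (n * k) = 0" using eqn cp_zero by simp
    then have "cp x k ^ n = 0" using lead rest cp_add by simp
    then have "cp x k = 0" using assms(2) unfolding reduced_ring_def by blast
    then show False using ck by simp
  qed
  then show ?thesis unfolding integrally_closed_ideal_def eq using ge_ideal by blast
qed

end
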